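(* Let $X=\Delta[2]/\partial\Delta[2]$. Then $DSd\,X\cong\Delta[1]$.
   Context: $Sd$ is the Kan (normal) subdivision functor on simplicial sets: the left Kan extension along the Yoneda embedding of $[n]\mapsto N(\text{poset of non-empty subsets of }[n])$; it commutes with colimits and preserves degreewise injective maps. $\Delta[2]/\partial\Delta[2]$ is the pushout of $\Delta[0]\leftarrow\partial\Delta[2]\to\Delta[2]$. A simplicial set is non-singular if every non-degenerate simplex has degreewise injective representing map. The desingularization $DY$ is the image of $Y\to\prod_f Z$, $y\mapsto(f(y))_f$, over all quotient maps $f:Y\to Z$ (maps $Y\to Y/R$ for operator-compatible families of equivalence relations) with $Z$ non-singular. *)

theory Defs
  imports Main
begin

text \<open>A simplicial set is given by its sets of n-simplices sobj X n and, for every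
monotone map alpha : [m] -> [n], the simplicial operator smap X n m alpha : X_n -> X_m.
Monotone maps [m] -> [n] are represented extensionally as functions nat => nat
that are 0 outside {0..m}.\<close>

record 'a sset =
  sobj :: "nat \<Rightarrow> 'a set"
  smap :: "nat \<Rightarrow> nat \<Rightarrow> (nat \<Rightarrow> nat) \<Rightarrow> 'a \<Rightarrow> 'a"

definition opmap :: "nat \<Rightarrow> nat \<Rightarrow> (nat \<Rightarrow> nat) set" where
  "opmap m n = {\<alpha>. (\<forall>i\<le>m. \<alpha> i \<le> n) \<and> (\<forall>i j. i \<le> j \<longrightarrow> j \<le> m \<longrightarrow> \<alpha> i \<le> \<alpha> j)
                   \<and> (\<forall>i>m. \<alpha> i = 0)}"

definition idop :: "nat \<Rightarrow> nat \<Rightarrow> nat" where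
  "idop n = (\<lambda>i. if i \<le> n then i else 0)"

definition ocomp :: "nat \<Rightarrow> (nat \<Rightarrow> nat) \<Rightarrow> (nat \<Rightarrow> nat) \<Rightarrow> nat \<Rightarrow> nat" where
  "ocomp k \<alpha> \<beta> = (\<lambda>i. if i \<le> k then \<alpha> (\<beta> i) else 0)"

definition is_sset :: "'a sset \<Rightarrow> bool" where
  "is_sset X \<longleftrightarrow>
     (\<forall>n m \<alpha> x. \<alpha> \<in> opmap m n \<longrightarrow> x \<in> sobj X n \<longrightarrow> smap X n m \<alpha> x \<in> sobj X m)
   \<and> (\<forall>n x. x \<in> sobj X n \<longrightarrow> smap X n n (idop n) x = x)
   \<and> (\<forall>n m k \<alpha> \<beta> x. \<alpha> \<in> opmap m n \<longrightarrow> \<beta> \<in> opmap k m \<longrightarrow> x \<in> sobj X n \<longrightarrow>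
        smap X m k \<beta> (smap X n m \<alpha> x) = smap X n k (ocomp k \<alpha> \<beta>) x)"

definition sset_iso :: "'a sset \<Rightarrow> 'b sset \<Rightarrow> (nat \<Rightarrow> 'a \<Rightarrow> 'b) \<Rightarrow> bool" where
  "sset_iso X Y f \<longleftrightarrow>
     (\<forall>n. bij_betw (f n) (sobj X n) (sobj Y n))
   \<and> (\<forall>n m \<alpha> x. \<alpha> \<in> opmap m n \<longrightarrow> x \<in> sobj X n \<longrightarrow>
        f m (smap X n m \<alpha> x) = smap Y n m \<alpha> (f n x))"

definition Delta :: "nat \<Rightarrow> (nat \<Rightarrow> nat) sset" where
  "Delta n = \<lparr> sobj = (\<lambda>k. opmap k n), smap = (\<lambda>k m \<alpha> f. ocomp m f \<alpha>) \<rparr>"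

definition bdry :: "nat \<Rightarrow> nat \<Rightarrow> (nat \<Rightarrow> nat) set" where
  "bdry n k = {f \<in> opmap k n. f ` {0..k} \<noteq> {0..n}}"

text \<open>Pushout of Delta[0] <- A -> X for a simplicial subset A of X (written X/A):
the simplices of X not in A, plus one extra simplex None in each degree (from Delta[0]).\<close>
definition collapse :: "'a sset \<Rightarrow> (nat \<Rightarrow> 'a set) \<Rightarrow> 'a option sset" where
  "collapse X A = \<lparr> sobj = (\<lambda>n. Some ` (sobj X n - A n) \<union> {None}),
     smap = (\<lambda>n m \<alpha> u. case u of None \<Rightarrow> None
               | Some x \<Rightarrow> (let y = smap X n m \<alpha> x in if y \<in> A m then None else Some y)) \<rparr>"

text \<open>k-simplices of the nerve of the poset of non-empty subsets of [n]:
chains c 0 <= ... <= c k of non-empty subsets of {0..n}.\<close>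
definition chains :: "nat \<Rightarrow> nat \<Rightarrow> (nat \<Rightarrow> nat set) set" where
  "chains n k = {c. (\<forall>i\<le>k. c i \<noteq> {} \<and> c i \<subseteq> {0..n}) \<and> (\<forall>i j. i \<le> j \<longrightarrow> j \<le> k \<longrightarrow> c i \<subseteq> c j)
                   \<and> (\<forall>i>k. c i = {})}"

definition cpush :: "(nat \<Rightarrow> nat) \<Rightarrow> nat \<Rightarrow> (nat \<Rightarrow> nat set) \<Rightarrow> nat \<Rightarrow> nat set" where
  "cpush \<alpha> k c = (\<lambda>i. if i \<le> k then \<alpha> ` c i else {})"

definition creindex :: "nat \<Rightarrow> (nat \<Rightarrow> nat) \<Rightarrow> (nat \<Rightarrow> nat set) \<Rightarrow> nat \<Rightarrow> nat set" where
  "creindex k' \<beta> c = (\<lambda>i. if i \<le> k' then c (\<beta> i) else {})"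

text \<open>Sd X = colimit over the simplex category of X of Sd Delta[n] (the left Kan extension
along Yoneda), computed by the usual coend formula: k-simplices are triples (n, x, c) with
x an n-simplex of X and c a k-chain in [n], modulo the equivalence relation generated by
(n', x, alpha_* c) ~ (n, alpha^* x, c).\<close>
definition sd_dom :: "'a sset \<Rightarrow> nat \<Rightarrow> (nat \<times> 'a \<times> (nat \<Rightarrow> nat set)) set" where
  "sd_dom X k = {(n, x, c). x \<in> sobj X n \<and> c \<in> chains n k}"

definition sd_gen :: "'a sset \<Rightarrow> nat \<Rightarrow> ((nat \<times> 'a \<times> (nat \<Rightarrow> nat set)) \<times> (nat \<times> 'a \<times> (nat \<Rightarrow> nat set))) set" where
  "sd_gen X k = {((n', x, cpush \<alpha> k c), (n, smap X n' n \<alpha> x, c)) | n n' \<alpha> x c.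
                   \<alpha> \<in> opmap n n' \<and> x \<in> sobj X n' \<and> c \<in> chains n k}"

definition sd_rel :: "'a sset \<Rightarrow> nat \<Rightarrow> ((nat \<times> 'a \<times> (nat \<Rightarrow> nat set)) \<times> (nat \<times> 'a \<times> (nat \<Rightarrow> nat set))) set" where
  "sd_rel X k = (sd_gen X k \<union> (sd_gen X k)\<inverse>)\<^sup>*"

definition Sd :: "'a sset \<Rightarrow> (nat \<times> 'a \<times> (nat \<Rightarrow> nat set)) set sset" where
  "Sd X = \<lparr> sobj = (\<lambda>k. {sd_rel X k `` {p} | p. p \<in> sd_dom X k}),
     smap = (\<lambda>k k' \<beta> C. sd_rel X k' `` {(case (SOME p. p \<in> C \<inter> sd_dom X k) of
                (n, x, c) \<Rightarrow> (n, x, creindex k' \<beta> c))}) \<rparr>"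

definition degenerate :: "'a sset \<Rightarrow> nat \<Rightarrow> 'a \<Rightarrow> bool" where
  "degenerate X n x \<longleftrightarrow> (\<exists>m \<alpha> y. m < n \<and> \<alpha> \<in> opmap n m \<and> y \<in> sobj X m \<and> x = smap X m n \<alpha> y)"

definition nonsingular :: "'a sset \<Rightarrow> bool" where
  "nonsingular X \<longleftrightarrow> (\<forall>n x. x \<in> sobj X n \<longrightarrow> \<not> degenerate X n x \<longrightarrow>
       (\<forall>k. inj_on (\<lambda>f. smap X n k f x) (opmap k n)))"

definition compat_eqrel :: "'a sset \<Rightarrow> (nat \<Rightarrow> ('a \<times> 'a) set) \<Rightarrow> bool" where
  "compat_eqrel Y R \<longleftrightarrow> (\<forall>n. equiv (sobj Y n) (R n))
     \<and> (\<forall>n m \<alpha> x y. \<alpha> \<in> opmap m n \<longrightarrow> (x, y) \<in> R n \<longrightarrow> (smap Y n m \<alpha> x, smap Y n m \<alpha> y) \<in> R m)"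

definition squot :: "'a sset \<Rightarrow> (nat \<Rightarrow> ('a \<times> 'a) set) \<Rightarrow> 'a set sset" where
  "squot Y R = \<lparr> sobj = (\<lambda>n. sobj Y n // R n),
     smap = (\<lambda>n m \<alpha> C. R m `` {smap Y n m \<alpha> (SOME x. x \<in> C)}) \<rparr>"

text \<open>The map Y -> prod_f Z, y |-> (f y)_f, over all quotient maps f : Y -> Y/R with Y/R
non-singular (the component at any other index is a dummy value {}).\<close>
definition dsing_vec :: "'a sset \<Rightarrow> nat \<Rightarrow> 'a \<Rightarrow> (nat \<Rightarrow> ('a \<times> 'a) set) \<Rightarrow> 'a set" where
  "dsing_vec Y n y = (\<lambda>R. if compat_eqrel Y R \<and> nonsingular (squot Y R) then R n `` {y} else {})"

definition Dsing :: "'a sset \<Rightarrow> ((nat \<Rightarrow> ('a \<times> 'a) set) \<Rightarrow> 'a set) sset" where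
  "Dsing Y = \<lparr> sobj = (\<lambda>n. dsing_vec Y n ` sobj Y n),
     smap = (\<lambda>n m \<alpha> t. dsing_vec Y m (smap Y n m \<alpha> (SOME y. y \<in> sobj Y n \<and> dsing_vec Y n y = t))) \<rparr>"

end

theory Submission
  imports Defs
begin


definition "XX = collapse (Delta 2) (bdry 2)"
definition "YY = Sd XX"
definition cls where "cls k p = sd_rel XX k `` {p}"
definition rx :: "nat \<Rightarrow> (nat \<Rightarrow> nat) \<Rightarrow> nat \<times> 'a \<times> (nat \<Rightarrow> nat set) \<Rightarrow> nat \<times> 'a \<times> (nat \<Rightarrow> nat set)" where
  "rx k' \<beta> p = (case p of (n,x,c) \<Rightarrow> (n,x,creindex k' \<beta> c))"

lemma opmapD: "\<alpha> \<in> opmap m n \<Longrightarrow> i \<le> m \<Longrightarrow> \<alpha> i \<le> n"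
  "\<alpha> \<in> opmap m n \<Longrightarrow> i \<le> j \<Longrightarrow> j \<le> m \<Longrightarrow> \<alpha> i \<le> \<alpha> j"
  "\<alpha> \<in> opmap m n \<Longrightarrow> m < i \<Longrightarrow> \<alpha> i = 0"
  by (auto simp: opmap_def)

lemma ocomp_opmap: "\<alpha> \<in> opmap m n \<Longrightarrow> \<beta> \<in> opmap k m \<Longrightarrow> ocomp k \<alpha> \<beta> \<in> opmap k n"
  by (auto simp: opmap_def ocomp_def)

lemma chainsD: "c \<in> chains n k \<Longrightarrow> i \<le> k \<Longrightarrow> c i \<noteq> {}"
  "c \<in> chains n k \<Longrightarrow> i \<le> k \<Longrightarrow> c i \<subseteq> {0..n}"
  "c \<in> chains n k \<Longrightarrow> i \<le> j \<Longrightarrow> j \<le> k \<Longrightarrow> c i \<subseteq> c j"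
  "c \<in> chains n k \<Longrightarrow> k < i \<Longrightarrow> c i = {}"
  by (auto simp: chains_def)

lemma creindex_chains: "c \<in> chains n k \<Longrightarrow> \<beta> \<in> opmap k' k \<Longrightarrow> creindex k' \<beta> c \<in> chains n k'"
  by (auto simp: chains_def opmap_def creindex_def)

lemma cpush_chains: "c \<in> chains n k \<Longrightarrow> \<alpha> \<in> opmap n n' \<Longrightarrow> cpush \<alpha> k c \<in> chains n' k"
  unfolding chains_def opmap_def cpush_def by (auto 0 3 simp: subset_iff) 

lemma creindex_cpush: "\<beta> \<in> opmap k' k \<Longrightarrow> creindex k' \<beta> (cpush \<alpha> k c) = cpush \<alpha> k' (creindex k' \<beta> c)"
  by (auto simp: opmap_def creindex_def cpush_def fun_eq_iff)

lemma creindex_comp: "\<gamma> \<in> opmap k'' k' \<Longrightarrow> creindex k'' \<gamma> (creindex k' \<beta> c) = creindex k'' (ocomp k'' \<beta> \<gamma>) c"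
  by (auto simp: opmap_def creindex_def ocomp_def fun_eq_iff)

lemma creindex_id: "c \<in> chains n k \<Longrightarrow> creindex k (idop k) c = c"
  by (auto simp: chains_def creindex_def idop_def fun_eq_iff)

lemma sobj_XX: "sobj XX n = Some ` (opmap n 2 - bdry 2 n) \<union> {None}"
  by (simp add: XX_def collapse_def Delta_def)
lemma smap_XX: "smap XX n m \<alpha> None = None"
  "smap XX n m \<alpha> (Some f) = (if ocomp m f \<alpha> \<in> bdry 2 m then None else Some (ocomp m f \<alpha>))"
  by (simp_all add: XX_def collapse_def Delta_def Let_def)

lemma sd_rel_refl: "(p,p) \<in> sd_rel X k" by (simp add: sd_rel_def)
lemma sd_rel_sym: "(p,q) \<in> sd_rel X k \<Longrightarrow> (q,p) \<in> sd_rel X k"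
  unfolding sd_rel_def by (metis sym_Un_converse sym_rtrancl symD)
lemma sd_rel_trans: "(p,q) \<in> sd_rel X k \<Longrightarrow> (q,r) \<in> sd_rel X k \<Longrightarrow> (p,r) \<in> sd_rel X k"
  unfolding sd_rel_def by (rule rtrancl_trans)
lemma sd_rel_gen: "(p,q) \<in> sd_gen X k \<Longrightarrow> (p,q) \<in> sd_rel X k"
  unfolding sd_rel_def by auto

lemma cls_eq: "cls k p = cls k q \<longleftrightarrow> (p,q) \<in> sd_rel XX k"
  unfolding cls_def
  by (metis Image_singleton_iff sd_rel_refl sd_rel_sym sd_rel_trans subsetI subset_antisym)

lemma rx_rel: assumes "(p,q) \<in> sd_rel X k" "\<beta> \<in> opmap k' k"
  shows "(rx k' \<beta> p, rx k' \<beta> q) \<in> sd_rel X k'"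
  using assms(1) unfolding sd_rel_def
proof (induction rule: rtrancl_induct)
  case base then show ?case by simp
next
  case (step y z)
  have g: "(rx k' \<beta> u, rx k' \<beta> v) \<in> sd_gen X k'" if "(u,v) \<in> sd_gen X k" for u v
  proof -
    from that obtain n n' \<alpha> x c where e: "u = (n', x, cpush \<alpha> k c)" "v = (n, smap X n' n \<alpha> x, c)"
      "\<alpha> \<in> opmap n n'" "x \<in> sobj X n'" "c \<in> chains n k" unfolding sd_gen_def by blast
    show ?thesis unfolding sd_gen_def using e assms(2)
      by (auto simp: rx_def creindex_cpush intro!: exI[of _ n] exI[of _ n'] exI[of _ \<alpha>] exI[of _ x]
            exI[of _ "creindex k' \<beta> c"] creindex_chains)
  qed
  from step.hyps(2) have "(rx k' \<beta> y, rx k' \<beta> z) \<in> sd_gen X k' \<union> (sd_gen X k')\<inverse>"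
    using g by blast
  with step.IH show ?case by (meson rtrancl.rtrancl_into_rtrancl)
qed

lemma rx_dom: "p \<in> sd_dom X k \<Longrightarrow> \<beta> \<in> opmap k' k \<Longrightarrow> rx k' \<beta> p \<in> sd_dom X k'"
  by (auto simp: sd_dom_def rx_def creindex_chains)

lemma sobj_YY: "sobj YY k = cls k ` sd_dom XX k"
  by (auto simp: YY_def Sd_def cls_def)

lemma smap_cls: assumes "p \<in> sd_dom XX k" "\<beta> \<in> opmap k' k"
  shows "smap YY k k' \<beta> (cls k p) = cls k' (rx k' \<beta> p)"
proof -
  let ?q = "SOME q. q \<in> cls k p \<inter> sd_dom XX k"
  have "\<exists>q. q \<in> cls k p \<inter> sd_dom XX k" using assms unfolding cls_def by (metis IntI Image_singleton_iff sd_rel_refl)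
  then have q: "?q \<in> cls k p \<inter> sd_dom XX k" by (rule someI_ex)
  then have "(p, ?q) \<in> sd_rel XX k" by (auto simp: cls_def)
  then have "(rx k' \<beta> p, rx k' \<beta> ?q) \<in> sd_rel XX k'" using rx_rel assms by blast
  then show ?thesis
    by (simp add: YY_def Sd_def cls_def[symmetric] rx_def[symmetric] cls_eq sd_rel_sym)
qed

lemma rx_comp: "\<gamma> \<in> opmap k'' k' \<Longrightarrow> rx k'' \<gamma> (rx k' \<beta> p) = rx k'' (ocomp k'' \<beta> \<gamma>) p"
  by (auto simp: rx_def creindex_comp split: prod.splits)

lemma rx_id: "p \<in> sd_dom X k \<Longrightarrow> rx k (idop k) p = p"
  by (auto simp: rx_def sd_dom_def creindex_id)

lemma is_sset_YY: "is_sset YY"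
  unfolding is_sset_def
proof (intro conjI allI impI)
  fix n m \<alpha> x assume "\<alpha> \<in> opmap m n" "x \<in> sobj YY n"
  then show "smap YY n m \<alpha> x \<in> sobj YY m"
    by (auto simp: sobj_YY smap_cls rx_dom)
next
  fix n x assume "x \<in> sobj YY n"
  then obtain p where "p \<in> sd_dom XX n" "x = cls n p" by (auto simp: sobj_YY)
  moreover have "idop n \<in> opmap n n" by (auto simp: idop_def opmap_def)
  ultimately show "smap YY n n (idop n) x = x" by (simp add: smap_cls rx_id)
next
  fix n m k \<alpha> \<beta> x assume a: "\<alpha> \<in> opmap m n" "\<beta> \<in> opmap k m" "x \<in> sobj YY n"
  then obtain p where "p \<in> sd_dom XX n" "x = cls n p" by (auto simp: sobj_YY)
  with a show "smap YY m k \<beta> (smap YY n m \<alpha> x) = smap YY n k (ocomp k \<alpha> \<beta>) x"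
    by (simp add: smap_cls rx_dom rx_comp ocomp_opmap)
qed


definition phi' :: "nat \<Rightarrow> nat \<times> (nat \<Rightarrow> nat) option \<times> (nat \<Rightarrow> nat set) \<Rightarrow> nat \<Rightarrow> nat" where
  "phi' k p = (case p of (n,x,c) \<Rightarrow> (\<lambda>i. if i \<le> k \<and> (\<exists>f. x = Some f \<and> f ` c i = {0..2}) then 1 else 0))"
definition Phi where "Phi k C = phi' k (SOME p. p \<in> C \<inter> sd_dom XX k)"

lemma phi'_Some: "phi' k (n, Some f, c) = (\<lambda>i. if i \<le> k \<and> f ` c i = {0..2} then 1 else 0)"
  by (simp add: phi'_def)
lemma phi'_None: "phi' k (n, None, c) = (\<lambda>i. 0)"
  by (simp add: phi'_def)

lemma ocomp_image: "S \<subseteq> {0..n} \<Longrightarrow> ocomp n f \<alpha> ` S = f ` \<alpha> ` S"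
  by (force simp: ocomp_def)

lemma phi'_gen: assumes "(p,q) \<in> sd_gen XX k" shows "phi' k p = phi' k q"
proof -
  from assms obtain n n' \<alpha> x c where e: "p = (n', x, cpush \<alpha> k c)" "q = (n, smap XX n' n \<alpha> x, c)"
      "\<alpha> \<in> opmap n n'" "x \<in> sobj XX n'" "c \<in> chains n k" unfolding sd_gen_def by blast
  show ?thesis
  proof (cases x)
    case None then show ?thesis using e by (simp add: phi'_def smap_XX)
  next
    case (Some f)
    with e have f: "f \<in> opmap n' 2" by (auto simp: sobj_XX)
    have g: "ocomp n f \<alpha> \<in> opmap n 2" using f e(3) by (rule ocomp_opmap)
    have "(f ` cpush \<alpha> k c i = {0..2}) = (ocomp n f \<alpha> \<notin> bdry 2 n \<and> ocomp n f \<alpha> ` c i = {0..2})"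
      if i: "i \<le> k" for i
    proof -
      have ci: "c i \<subseteq> {0..n}" using e(5) i by (rule chainsD)
      have im: "ocomp n f \<alpha> ` c i = f ` cpush \<alpha> k c i" using ci i by (simp add: ocomp_image cpush_def)
      have sub: "ocomp n f \<alpha> ` {0..n} \<subseteq> {0..2}" using g by (auto simp: opmap_def)
      have "ocomp n f \<alpha> ` c i \<subseteq> ocomp n f \<alpha> ` {0..n}" using ci by auto
      have ci2: "ocomp n f \<alpha> ` c i \<subseteq> ocomp n f \<alpha> ` {0..n}" using ci by (rule image_mono)
      have nb: "ocomp n f \<alpha> \<notin> bdry 2 n" if "ocomp n f \<alpha> ` c i = {0..2}"
      proof -
        have "ocomp n f \<alpha> ` {0..n} = {0..2}" using sub ci2 that by (rule_tac equalityI) auto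
        then show ?thesis by (simp add: bdry_def)
      qed
      show ?thesis using nb im by metis
    qed
    then show ?thesis using e Some by (auto simp: phi'_Some smap_XX fun_eq_iff phi'_None)
  qed
qed

lemma phi'_rel: assumes "(p,q) \<in> sd_rel XX k" shows "phi' k p = phi' k q"
  using assms unfolding sd_rel_def
proof (induction rule: rtrancl_induct)
  case base then show ?case by simp
next
  case (step y z) then show ?case using phi'_gen by (metis UnE converseD)
qed

lemma Phi_cls: assumes "p \<in> sd_dom XX k" shows "Phi k (cls k p) = phi' k p"
proof -
  let ?q = "SOME q. q \<in> cls k p \<inter> sd_dom XX k"
  have "\<exists>q. q \<in> cls k p \<inter> sd_dom XX k" using assms unfolding cls_def by (metis IntI Image_singleton_iff sd_rel_refl)
  then have q: "?q \<in> cls k p \<inter> sd_dom XX k" by (rule someI_ex)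
  then have "(p, ?q) \<in> sd_rel XX k" by (auto simp: cls_def)
  then show ?thesis unfolding Phi_def using phi'_rel by metis
qed

lemma phi'_rx: assumes "\<beta> \<in> opmap k' k" shows "phi' k' (rx k' \<beta> p) = ocomp k' (phi' k p) \<beta>"
proof -
  obtain n x c where p: "p = (n,x,c)" by (cases p)
  have "phi' k' (rx k' \<beta> p) i = ocomp k' (phi' k p) \<beta> i" for i
  proof (cases "i \<le> k'")
    case True
    then have "\<beta> i \<le> k" using opmapD(1)[OF assms] by simp
    then show ?thesis using True by (simp add: p phi'_def rx_def ocomp_def creindex_def)
  next
    case False
    then show ?thesis by (simp add: p phi'_def rx_def ocomp_def creindex_def)
  qed
  then show ?thesis by (simp add: fun_eq_iff)
qed

lemma opmapI: "(\<And>i. i \<le> m \<Longrightarrow> \<alpha> i \<le> n) \<Longrightarrow> (\<And>i j. i\<le>j \<Longrightarrow> j \<le> m \<Longrightarrow> \<alpha> i \<le> \<alpha> j)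
  \<Longrightarrow> (\<And>i. m<i \<Longrightarrow> \<alpha> i = 0) \<Longrightarrow> \<alpha> \<in> opmap m n"
  by (auto simp: opmap_def)

lemma phi'_opmap: assumes "p \<in> sd_dom XX k" shows "phi' k p \<in> opmap k 1"
proof -
  obtain n x c where p: "p = (n,x,c)" "x \<in> sobj XX n" "c \<in> chains n k" using assms by (auto simp: sd_dom_def)
  have "(\<exists>f. x = Some f \<and> f ` c j = {0..2})" if "i \<le> j" "j \<le> k" "\<exists>f. x = Some f \<and> f ` c i = {0..2}" for i j
  proof -
    from that obtain f where f: "x = Some f" "f ` c i = {0..2}" by blast
    then have fo: "f \<in> opmap n 2" using p by (auto simp: sobj_XX)
    have cij: "c i \<subseteq> c j" using chainsD(3)[OF p(3) that(1,2)] .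
    have cj: "c j \<subseteq> {0..n}" using chainsD(2)[OF p(3) that(2)] .
    have "f ` c j \<subseteq> {0..2}"
    proof
      fix y assume "y \<in> f ` c j"
      then obtain z where "z \<in> c j" "y = f z" by blast
      then show "y \<in> {0..2}" using cj opmapD(1)[OF fo, of z] by auto
    qed
    moreover have "f ` c i \<subseteq> f ` c j" using cij by (rule image_mono)
    ultimately have "f ` c j = {0..2}" using f(2) by (metis subset_antisym)
    then show ?thesis using f by blast
  qed
  then show ?thesis unfolding phi'_def p
    by (intro opmapI) auto
qed

lemma Phi_nat: assumes "y \<in> sobj YY n" "\<alpha> \<in> opmap m n"
  shows "Phi m (smap YY n m \<alpha> y) = ocomp m (Phi n y) \<alpha>"
proof -
  obtain p where "p \<in> sd_dom XX n" "y = cls n p" using assms by (auto simp: sobj_YY)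
  then show ?thesis using assms by (simp add: smap_cls Phi_cls rx_dom phi'_rx)
qed

lemma Phi_opmap: "y \<in> sobj YY n \<Longrightarrow> Phi n y \<in> opmap n 1"
  by (auto simp: sobj_YY Phi_cls phi'_opmap simp del: One_nat_def)

definition "id2 = Some (idop 2)"
definition cg :: "nat \<Rightarrow> (nat \<Rightarrow> nat) \<Rightarrow> nat \<Rightarrow> nat set" where
  "cg k g = (\<lambda>i. if i \<le> k then (if g i = 1 then {0..2} else {0}) else {})"
definition "EE d = (2::nat, id2, d)"

lemma idop2_image: assumes "S \<subseteq> {0..2}" shows "idop 2 ` S = S"
proof -
  have "\<forall>x\<in>S. idop 2 x = x" using assms by (auto simp: idop_def)
  then show ?thesis by simp
qed

lemma idop_opmap: "idop n \<in> opmap n n" by (auto simp: idop_def opmap_def)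

lemma id2_X: "id2 \<in> sobj XX 2"
proof -
  have "idop 2 \<notin> bdry 2 2" using idop2_image[of "{0..2}"] by (simp add: bdry_def)
  then show ?thesis using idop_opmap by (simp add: sobj_XX id2_def)
qed

lemma EE_dom: "d \<in> chains 2 k \<Longrightarrow> EE d \<in> sd_dom XX k"
  using id2_X by (simp add: EE_def sd_dom_def)

lemma cg_chains: assumes "g \<in> opmap k 1" shows "cg k g \<in> chains 2 k"
proof -
  have m: "g i = 1 \<Longrightarrow> g j = 1" if "i \<le> j" "j \<le> k" for i j
    using opmapD(1)[OF assms that(2)] opmapD(2)[OF assms that] by simp
  have "{0::nat} \<subseteq> {0..2}" by simp
  then show ?thesis unfolding chains_def cg_def using m
    by (intro CollectI conjI allI impI) auto
qed

lemma phi'_EE: assumes "d \<in> chains 2 k" shows "phi' k (EE d) = (\<lambda>i. if i \<le> k \<and> d i = {0..2} then 1 else 0)"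
proof -
  have "idop 2 ` d i = d i" if "i\<le>k" for i using chainsD(2)[OF assms that] idop2_image by auto
  then show ?thesis unfolding phi'_Some EE_def id2_def fun_eq_iff by (metis (no_types, lifting))
qed

lemma ne02: "{0::nat} \<noteq> {0..2}"
proof
  assume "{0::nat} = {0..2}"
  then have "(2::nat) \<in> {0}" by (metis atLeastAtMost_iff le_refl zero_le)
  then show False by simp
qed

lemma phi'_cg: assumes "g \<in> opmap k 1" shows "phi' k (EE (cg k g)) = g"
proof -
  have "(if i \<le> k \<and> cg k g i = {0..2} then 1 else 0) = g i" for i
  proof (cases "i \<le> k")
    case True
    then have "g i \<le> 1" using opmapD(1)[OF assms True] by simp
    then have "g i = 0 \<or> g i = 1" by auto
    then show ?thesis using True ne02 by (auto simp: cg_def)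
  next
    case False then show ?thesis using opmapD(3)[OF assms] by simp
  qed
  then show ?thesis by (simp add: phi'_EE[OF cg_chains[OF assms]] fun_eq_iff)
qed

lemma Phi_surj: "g \<in> opmap k 1 \<Longrightarrow> cls k (EE (cg k g)) \<in> sobj YY k \<and> Phi k (cls k (EE (cg k g))) = g"
  by (simp add: sobj_YY EE_dom cg_chains Phi_cls phi'_cg)


definition "v0 = (\<lambda>i::nat. 0::nat)"
definition "v1 = (\<lambda>i::nat. if i = 0 then 1 else 0::nat)"
definition "dd0 = (\<lambda>i::nat. if i = 0 then 1 else if i = 1 then 2 else 0::nat)"
definition "dd1 = (\<lambda>i::nat. if i = 1 then 2 else 0::nat)"
definition "dd2 = (\<lambda>i::nat. if i = 1 then 1 else 0::nat)"
definition "s0 = (\<lambda>i::nat. if i = 2 then 1 else 0::nat)"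
definition "s1 = (\<lambda>i::nat. if i = 1 \<or> i = 2 then 1 else 0::nat)"

lemma ops_opmap: "v0 \<in> opmap 0 2" "v1 \<in> opmap 0 2" "dd0 \<in> opmap 1 2" "dd1 \<in> opmap 1 2"
  "dd2 \<in> opmap 1 2" "s0 \<in> opmap 2 1" "s1 \<in> opmap 2 1"
  by (intro opmapI; simp add: v0_def v1_def dd0_def dd1_def dd2_def s0_def s1_def)+

lemma ceq_equiv: "compat_eqrel Y R \<Longrightarrow> equiv (sobj Y n) (R n)"
  by (simp add: compat_eqrel_def)
lemma ceq_sym: assumes "compat_eqrel Y R" "(x,y) \<in> R n" shows "(y,x) \<in> R n"
proof -
  have "sym (R n)" using ceq_equiv[OF assms(1)] by (simp add: equiv_def)
  then show ?thesis using assms(2) by (rule symD)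
qed
lemma ceq_trans: assumes "compat_eqrel Y R" "(x,y) \<in> R n" "(y,z) \<in> R n" shows "(x,z) \<in> R n"
proof -
  have "trans (R n)" using ceq_equiv[OF assms(1)] by (simp add: equiv_def)
  then show ?thesis using assms(2,3) by (rule transD)
qed
lemma ceq_refl: assumes "compat_eqrel Y R" "x \<in> sobj Y n" shows "(x,x) \<in> R n"
proof -
  have "refl_on (sobj Y n) (R n)" using ceq_equiv[OF assms(1)] by (simp add: equiv_def)
  then show ?thesis using assms(2) by (rule refl_onD)
qed
lemma ceq_map: "compat_eqrel Y R \<Longrightarrow> \<alpha> \<in> opmap m n \<Longrightarrow> (x,y) \<in> R n \<Longrightarrow> (smap Y n m \<alpha> x, smap Y n m \<alpha> y) \<in> R m"
  by (simp add: compat_eqrel_def)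

lemma sset_closed: "is_sset Y \<Longrightarrow> \<alpha> \<in> opmap m n \<Longrightarrow> x \<in> sobj Y n \<Longrightarrow> smap Y n m \<alpha> x \<in> sobj Y m"
  by (simp add: is_sset_def)
lemma sset_comp: "is_sset Y \<Longrightarrow> \<alpha> \<in> opmap m n \<Longrightarrow> \<beta> \<in> opmap k m \<Longrightarrow> x \<in> sobj Y n \<Longrightarrow>
        smap Y m k \<beta> (smap Y n m \<alpha> x) = smap Y n k (ocomp k \<alpha> \<beta>) x"
  by (simp add: is_sset_def)

lemma squot_smap: assumes "is_sset Y" "compat_eqrel Y R" "y \<in> sobj Y n" "\<alpha> \<in> opmap m n"
  shows "smap (squot Y R) n m \<alpha> (R n `` {y}) = R m `` {smap Y n m \<alpha> y}"
proof -
  let ?x = "SOME x. x \<in> R n `` {y}"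
  have "y \<in> R n `` {y}" using ceq_refl[OF assms(2,3)] by simp
  then have "?x \<in> R n `` {y}" by (rule someI)
  then have "(y, ?x) \<in> R n" by simp
  then have "(smap Y n m \<alpha> y, smap Y n m \<alpha> ?x) \<in> R m" by (rule ceq_map[OF assms(2,4)])
  then have "R m `` {smap Y n m \<alpha> ?x} = R m `` {smap Y n m \<alpha> y}"
    using equiv_class_eq[OF ceq_equiv[OF assms(2)]] by metis
  then show ?thesis by (simp add: squot_def)
qed

lemma class_eq_rel: assumes "compat_eqrel Y R" "x \<in> sobj Y n" "y \<in> sobj Y n" "R n `` {x} = R n `` {y}"
  shows "(x,y) \<in> R n"
  using equiv_class_eq_iff[OF ceq_equiv[OF assms(1)]] assms by blast

lemma DEG: assumes Y: "is_sset Y" and R: "compat_eqrel Y R" and ns: "nonsingular (squot Y R)"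
  and t: "t \<in> sobj Y 2" and v: "(smap Y 2 0 v0 t, smap Y 2 0 v1 t) \<in> R 0"
  shows "(t, smap Y 1 2 s0 (smap Y 2 1 dd1 t)) \<in> R 2 \<or> (t, smap Y 1 2 s1 (smap Y 2 1 dd2 t)) \<in> R 2"
proof -
  let ?Q = "squot Y R"
  let ?T = "R 2 `` {t}"
  have TQ: "?T \<in> sobj ?Q 2" using t by (simp add: squot_def quotientI)
  have "smap ?Q 2 0 v0 ?T = smap ?Q 2 0 v1 ?T"
    using squot_smap[OF Y R t] ops_opmap equiv_class_eq[OF ceq_equiv[OF R] v] by simp
  moreover have "v0 \<noteq> v1" by (auto simp: v0_def v1_def fun_eq_iff)
  ultimately have "\<not> inj_on (\<lambda>f. smap ?Q 2 0 f ?T) (opmap 0 2)"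
    using ops_opmap by (meson inj_on_def)
  moreover have ns': "\<And>n x k. x \<in> sobj ?Q n \<Longrightarrow> \<not> degenerate ?Q n x \<Longrightarrow> inj_on (\<lambda>f. smap ?Q n k f x) (opmap k n)"
    using ns unfolding nonsingular_def by blast
  ultimately have "degenerate ?Q 2 ?T" using TQ by blast
  then obtain m \<alpha> W where m: "m < 2" "\<alpha> \<in> opmap 2 m" "W \<in> sobj ?Q m" "?T = smap ?Q m 2 \<alpha> W"
    unfolding degenerate_def by blast
  have "W \<in> sobj Y m // R m" using m(3) by (simp add: squot_def)
  then obtain w where w: "w \<in> sobj Y m" "W = R m `` {w}" by (rule quotientE)
  have "?T = R 2 `` {smap Y m 2 \<alpha> w}" using m(4) w squot_smap[OF Y R w(1) m(2)] by simp
  then have tw: "(t, smap Y m 2 \<alpha> w) \<in> R 2"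
    using class_eq_rel[OF R t sset_closed[OF Y m(2) w(1)]] by simp
  have a2: "\<alpha> i \<le> 1" if "i \<le> 2" for i using opmapD(1)[OF m(2) that] m(1) by simp
  have a3: "\<alpha> i = 0" if "2 < i" for i using opmapD(3)[OF m(2) that] .
  have mono: "\<alpha> 0 \<le> \<alpha> 1" "\<alpha> 1 \<le> \<alpha> 2" using opmapD(2)[OF m(2), of 0 1] opmapD(2)[OF m(2), of 1 2] by simp_all
  have "\<alpha> 0 = \<alpha> 1 \<or> \<alpha> 1 = \<alpha> 2" using a2[of 0] a2[of 1] a2[of 2] mono by linarith
  then show ?thesis
  proof
    assume e: "\<alpha> 0 = \<alpha> 1"
    have "ocomp 2 (ocomp 1 \<alpha> dd1) s0 = \<alpha>"
    proof
      fix i show "ocomp 2 (ocomp 1 \<alpha> dd1) s0 i = \<alpha> i"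
        proof -
        have "i = 0 \<or> i = 1 \<or> i = 2 \<or> 2 < i" by linarith
        then show ?thesis using e a3[of i] by (elim disjE) (simp_all add: ocomp_def dd1_def s0_def)
      qed
    qed
    then have eq: "smap Y 1 2 s0 (smap Y 2 1 dd1 (smap Y m 2 \<alpha> w)) = smap Y m 2 \<alpha> w"
      using sset_comp[OF Y m(2) ops_opmap(4) w(1)]
        sset_comp[OF Y ocomp_opmap[OF m(2) ops_opmap(4)] ops_opmap(6) w(1)] by simp
    have "(smap Y 1 2 s0 (smap Y 2 1 dd1 t), smap Y 1 2 s0 (smap Y 2 1 dd1 (smap Y m 2 \<alpha> w))) \<in> R 2"
      by (rule ceq_map[OF R ops_opmap(6) ceq_map[OF R ops_opmap(4) tw]])
    then have "(smap Y 1 2 s0 (smap Y 2 1 dd1 t), t) \<in> R 2"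
      using eq ceq_trans[OF R _ ceq_sym[OF R tw]] by simp
    then have "(t, smap Y 1 2 s0 (smap Y 2 1 dd1 t)) \<in> R 2" by (rule ceq_sym[OF R])
    then show ?thesis ..
  next
    assume e: "\<alpha> 1 = \<alpha> 2"
    have "ocomp 2 (ocomp 1 \<alpha> dd2) s1 = \<alpha>"
    proof
      fix i show "ocomp 2 (ocomp 1 \<alpha> dd2) s1 i = \<alpha> i"
        proof -
        have "i = 0 \<or> i = 1 \<or> i = 2 \<or> 2 < i" by linarith
        then show ?thesis using e a3[of i] by (elim disjE) (simp_all add: ocomp_def dd2_def s1_def)
      qed
    qed
    then have eq: "smap Y 1 2 s1 (smap Y 2 1 dd2 (smap Y m 2 \<alpha> w)) = smap Y m 2 \<alpha> w"
      using sset_comp[OF Y m(2) ops_opmap(5) w(1)]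
        sset_comp[OF Y ocomp_opmap[OF m(2) ops_opmap(5)] ops_opmap(7) w(1)] by simp
    have "(smap Y 1 2 s1 (smap Y 2 1 dd2 t), smap Y 1 2 s1 (smap Y 2 1 dd2 (smap Y m 2 \<alpha> w))) \<in> R 2"
      by (rule ceq_map[OF R ops_opmap(7) ceq_map[OF R ops_opmap(5) tw]])
    then have "(smap Y 1 2 s1 (smap Y 2 1 dd2 t), t) \<in> R 2"
      using eq ceq_trans[OF R _ ceq_sym[OF R tw]] by simp
    then have "(t, smap Y 1 2 s1 (smap Y 2 1 dd2 t)) \<in> R 2" by (rule ceq_sym[OF R])
    then show ?thesis ..
  qed
qed


definition R0 :: "nat \<Rightarrow> ((nat \<times> (nat \<Rightarrow> nat) option \<times> (nat \<Rightarrow> nat set)) set \<times> (nat \<times> (nat \<Rightarrow> nat) option \<times> (nat \<Rightarrow> nat set)) set) set" where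
  "R0 n = {(y,y'). y \<in> sobj YY n \<and> y' \<in> sobj YY n \<and> Phi n y = Phi n y'}"

lemma R0_compat: "compat_eqrel YY R0"
  unfolding compat_eqrel_def
proof (intro conjI allI impI)
  fix n show "equiv (sobj YY n) (R0 n)"
    unfolding equiv_def refl_on_def sym_def trans_def R0_def by auto
next
  fix n m \<alpha> x y assume "\<alpha> \<in> opmap m n" "(x, y) \<in> R0 n"
  then show "(smap YY n m \<alpha> x, smap YY n m \<alpha> y) \<in> R0 m"
    unfolding R0_def using Phi_nat sset_closed[OF is_sset_YY] by auto
qed

lemma R0_class: "y \<in> sobj YY n \<Longrightarrow> R0 n `` {y} = {y' \<in> sobj YY n. Phi n y' = Phi n y}"
  by (auto simp: R0_def)

lemma R0_nonsing: "nonsingular (squot YY R0)"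
  unfolding nonsingular_def
proof (intro allI impI)
  let ?Q = "squot YY R0"
  fix n C k assume C: "C \<in> sobj ?Q n" and nd: "\<not> degenerate ?Q n C"
  have "C \<in> sobj YY n // R0 n" using C by (simp add: squot_def)
  then obtain y where y: "y \<in> sobj YY n" "C = R0 n `` {y}" by (rule quotientE)
  define g where "g = Phi n y"
  have g: "g \<in> opmap n 1" using Phi_opmap[OF y(1)] by (simp add: g_def)
  have ginj: "g i \<noteq> g j" if ij: "i < j" "j \<le> n" for i j
  proof
    assume gij: "g i = g j"
    have "g i \<le> g (Suc i)" "g (Suc i) \<le> g j" using opmapD(2)[OF g] ij by auto
    then have gs: "g i = g (Suc i)" using gij by simp
    define m where "m = n - 1"
    have nm: "n = Suc m" using ij by (simp add: m_def)
    have im: "i \<le> m" using ij nm by simp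
    define \<sigma> where "\<sigma> = (\<lambda>l. if l \<le> n then (if l \<le> i then l else l - 1) else 0)"
    define h where "h = (\<lambda>l. if l \<le> m then g (if l \<le> i then l else Suc l) else 0)"
    have \<sigma>: "\<sigma> \<in> opmap n m"
      using im by (intro opmapI) (auto simp: \<sigma>_def nm)
    have h: "h \<in> opmap m 1"
    proof (rule opmapI)
      fix l assume "l \<le> m" then show "h l \<le> 1" using opmapD(1)[OF g] by (auto simp: h_def nm)
    next
      fix l l' assume "l \<le> l'" "l' \<le> m" then show "h l \<le> h l'"
        using opmapD(2)[OF g] by (auto simp: h_def nm)
    next
      fix l assume "m < l" then show "h l = 0" by (simp add: h_def)
    qed
    obtain y' where y': "y' \<in> sobj YY m" "Phi m y' = h" using Phi_surj[OF h] by blast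
    let ?W = "R0 m `` {y'}"
    have W: "?W \<in> sobj ?Q m" using y'(1) by (simp add: squot_def quotientI)
    have eqg: "ocomp n h \<sigma> = g"
    proof
      fix l show "ocomp n h \<sigma> l = g l"
      proof (cases "l \<le> n")
        case True
        have "l \<le> i \<or> l = Suc i \<or> Suc i < l" by arith
        then show ?thesis using gs im True by (elim disjE) (auto simp: ocomp_def h_def \<sigma>_def nm)
      next
        case False then show ?thesis using opmapD(3)[OF g] by (simp add: ocomp_def)
      qed
    qed
    have s: "smap ?Q m n \<sigma> ?W = R0 n `` {smap YY m n \<sigma> y'}"
      by (rule squot_smap[OF is_sset_YY R0_compat y'(1) \<sigma>])
    have "Phi n (smap YY m n \<sigma> y') = g" using Phi_nat[OF y'(1) \<sigma>] y'(2) eqg by simp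
    moreover have "smap YY m n \<sigma> y' \<in> sobj YY n" by (rule sset_closed[OF is_sset_YY \<sigma> y'(1)])
    ultimately have "R0 n `` {smap YY m n \<sigma> y'} = C"
      using y R0_class by (simp add: g_def)
    then have "degenerate ?Q n C" unfolding degenerate_def using s W \<sigma> nm
      by (intro exI[of _ m] exI[of _ \<sigma>] exI[of _ ?W]) auto
    then show False using nd by simp
  qed
  show "inj_on (\<lambda>f. smap ?Q n k f C) (opmap k n)"
  proof (rule inj_onI)
    fix f f' assume f: "f \<in> opmap k n" and f': "f' \<in> opmap k n"
      and e: "smap ?Q n k f C = smap ?Q n k f' C"
    have "R0 k `` {smap YY n k f y} = R0 k `` {smap YY n k f' y}"
      using e y squot_smap[OF is_sset_YY R0_compat y(1) f] squot_smap[OF is_sset_YY R0_compat y(1) f'] by simp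
    then have "(smap YY n k f y, smap YY n k f' y) \<in> R0 k"
      using class_eq_rel[OF R0_compat] sset_closed[OF is_sset_YY f y(1)] sset_closed[OF is_sset_YY f' y(1)] by blast
    then have "ocomp k g f = ocomp k g f'"
      unfolding R0_def using Phi_nat[OF y(1) f] Phi_nat[OF y(1) f'] by (simp add: g_def)
    show "f = f'"
    proof
      fix i show "f i = f' i"
      proof (cases "i \<le> k")
        case True
        then have "g (f i) = g (f' i)" using \<open>ocomp k g f = ocomp k g f'\<close>
          by (metis ocomp_def)
        moreover have "f i \<le> n" "f' i \<le> n" using opmapD(1) f f' True by auto
        ultimately show ?thesis using ginj by (metis linorder_neqE_nat)
      next
        case False then show ?thesis using opmapD(3)[OF f] opmapD(3)[OF f'] by simp
      qed
    qed
  qed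
qed


definition c0 :: "nat \<Rightarrow> nat \<Rightarrow> nat set" where "c0 k = (\<lambda>i. if i \<le> k then {0} else {})"
definition "UU = {0..2::nat}"

lemma chainsI: "(\<And>i. i\<le>k \<Longrightarrow> c i \<noteq> {}) \<Longrightarrow> (\<And>i. i \<le> k \<Longrightarrow> c i \<subseteq> {0..n})
  \<Longrightarrow> (\<And>i j. i\<le>j \<Longrightarrow> j\<le>k \<Longrightarrow> c i \<subseteq> c j) \<Longrightarrow> (\<And>i. k<i \<Longrightarrow> c i = {}) \<Longrightarrow> c \<in> chains n k"
  unfolding chains_def by blast

lemma c0_chains: "c0 k \<in> chains 2 k"
  by (rule chainsI) (simp_all add: c0_def)

lemma cpush_const: assumes "c \<in> chains n k" shows "cpush (\<lambda>i. 0) k c = c0 k"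
proof
  fix i show "cpush (\<lambda>i. 0) k c i = c0 k i"
    using chainsD(1)[OF assms, of i] by (auto simp: cpush_def c0_def)
qed

lemma const_opmap: "(\<lambda>i. 0) \<in> opmap n 0" by (rule opmapI) auto

lemma sd_genI: "\<alpha> \<in> opmap n n' \<Longrightarrow> x \<in> sobj X n' \<Longrightarrow> c \<in> chains n k \<Longrightarrow>
   ((n', x, cpush \<alpha> k c), (n, smap X n' n \<alpha> x, c)) \<in> sd_gen X k"
  unfolding sd_gen_def by blast

lemma gen_None: assumes "c \<in> chains n k" shows "((0, None, c0 k), (n, None, c)) \<in> sd_gen XX k"
proof -
  have "((0, None, cpush (\<lambda>i. 0) k c), (n, smap XX 0 n (\<lambda>i. 0) None, c)) \<in> sd_gen XX k"
    using const_opmap _ assms by (rule sd_genI) (simp add: sobj_XX)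
  then show ?thesis using cpush_const[OF assms] by (simp add: smap_XX)
qed

lemma ocomp_idop: assumes "f \<in> opmap n m" shows "ocomp n (idop m) f = f"
proof
  fix i show "ocomp n (idop m) f i = f i"
    using opmapD(1)[OF assms, of i] opmapD(3)[OF assms, of i] by (auto simp: ocomp_def idop_def)
qed

lemma gen_Some: assumes "f \<in> opmap n 2" "f \<notin> bdry 2 n" "c \<in> chains n k"
  shows "(EE (cpush f k c), (n, Some f, c)) \<in> sd_gen XX k"
proof -
  have "((2, id2, cpush f k c), (n, smap XX 2 n f id2, c)) \<in> sd_gen XX k"
    using assms(1) id2_X assms(3) by (rule sd_genI)
  then show ?thesis using assms ocomp_idop[OF assms(1)] by (simp add: smap_XX id2_def EE_def)
qed

definition rho :: "nat \<Rightarrow> nat \<Rightarrow> nat" where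
  "rho e = (\<lambda>i. if i \<le> 2 then (if i = e then (if e = 0 then 1 else e - 1) else i) else 0)"

lemma rho_opmap: assumes "e \<le> 2" shows "rho e \<in> opmap 2 2"
proof -
  have "e = 0 \<or> e = 1 \<or> e = 2" using assms by arith
  then show ?thesis
  proof (elim disjE)
    assume "e = 0" then show ?thesis
      by (intro opmapI) (auto simp: rho_def)
  next
    assume "e = 1" then show ?thesis
      by (intro opmapI) (auto simp: rho_def)
  next
    assume "e = 2" then show ?thesis
      by (intro opmapI) (auto simp: rho_def)
  qed
qed

lemma rho_bdry: assumes "e \<le> 2" shows "rho e \<in> bdry 2 2"
proof -
  have "e \<notin> rho e ` {0..2}"
  proof
    assume "e \<in> rho e ` {0..2}"
    then obtain l where "l \<le> 2" "e = rho e l" by auto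
    then show False by (auto simp: rho_def split: if_splits)
  qed
  then have "rho e ` {0..2} \<noteq> {0..2}" using assms by auto
  then show ?thesis using rho_opmap[OF assms] by (simp add: bdry_def)
qed

lemma base_rel: assumes d: "d \<in> chains 2 k" and top: "d k \<noteq> UU"
  shows "(EE d, (0, None, c0 k)) \<in> sd_rel XX k"
proof -
  have dk: "d k \<subseteq> UU" using chainsD(2)[OF d, of k] by (simp add: UU_def)
  have "\<exists>e. e \<le> 2 \<and> e \<notin> d k"
  proof (rule ccontr)
    assume "\<not> ?thesis"
    then have "UU \<subseteq> d k" by (auto simp: UU_def)
    then show False using dk top by blast
  qed
  then obtain e where e: "e \<le> 2" "e \<notin> d k" by blast
  have cp: "cpush (rho e) k d = d"
  proof
    fix i show "cpush (rho e) k d i = d i"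
    proof (cases "i \<le> k")
      case True
      have "d i \<subseteq> d k" using chainsD(3)[OF d _ order_refl] True by blast
      have "rho e x = x" if "x \<in> d i" for x
      proof -
        have "x \<in> d k" using that \<open>d i \<subseteq> d k\<close> by blast
        then have "x \<le> 2" "x \<noteq> e" using dk e by (auto simp: UU_def)
        then show ?thesis by (simp add: rho_def)
      qed
      then have "\<forall>x\<in>d i. rho e x = x" by blast
      then show ?thesis using True by (simp add: cpush_def)
    next
      case False then show ?thesis using chainsD(4)[OF d] by (simp add: cpush_def)
    qed
  qed
  have "((2, id2, cpush (rho e) k d), (2, smap XX 2 2 (rho e) id2, d)) \<in> sd_gen XX k"
    using rho_opmap[OF e(1)] id2_X d by (rule sd_genI)
  then have g1: "(EE d, (2, None, d)) \<in> sd_gen XX k"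
    using cp ocomp_idop[OF rho_opmap[OF e(1)]] rho_bdry[OF e(1)] by (simp add: smap_XX id2_def EE_def)
  have g2: "((0, None, c0 k), (2, None, d)) \<in> sd_gen XX k" by (rule gen_None[OF d])
  show ?thesis using sd_rel_trans[OF sd_rel_gen[OF g1] sd_rel_sym[OF sd_rel_gen[OF g2]]] .
qed

lemma reduce: assumes "p \<in> sd_dom XX k" shows "\<exists>d \<in> chains 2 k. (p, EE d) \<in> sd_rel XX k"
proof -
  obtain n x c where p: "p = (n,x,c)" "x \<in> sobj XX n" "c \<in> chains n k" using assms by (auto simp: sd_dom_def)
  show ?thesis
  proof (cases x)
    case None
    have "((0, None, c0 k), p) \<in> sd_rel XX k" using gen_None[OF p(3)] p None sd_rel_gen by simp
    moreover have "(EE (c0 k), (0, None, c0 k)) \<in> sd_rel XX k"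
      by (rule base_rel[OF c0_chains]) (simp add: c0_def UU_def ne02)
    ultimately have "(p, EE (c0 k)) \<in> sd_rel XX k" using sd_rel_sym sd_rel_trans by metis
    then show ?thesis using c0_chains by blast
  next
    case (Some f)
    then have f: "f \<in> opmap n 2" "f \<notin> bdry 2 n" using p(2) by (auto simp: sobj_XX)
    have "(EE (cpush f k c), p) \<in> sd_rel XX k" using gen_Some[OF f p(3)] p Some sd_rel_gen by simp
    then show ?thesis using cpush_chains[OF p(3) f(1)] sd_rel_sym by blast
  qed
qed


definition NN :: "nat \<Rightarrow> (nat \<Rightarrow> nat set) \<Rightarrow> nat \<Rightarrow> nat set" where
  "NN k d = (\<lambda>i. if i \<le> k then (if d i = UU then UU else {0}) else {})"

lemma NN_creindex: assumes "\<beta> \<in> opmap k 2" shows "NN k (creindex k \<beta> D) = creindex k \<beta> (NN 2 D)"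
proof
  fix i show "NN k (creindex k \<beta> D) i = creindex k \<beta> (NN 2 D) i"
    using opmapD(1)[OF assms, of i] by (simp add: NN_def creindex_def)
qed

lemma mid_unique: assumes d: "d \<in> chains 2 k" and i: "i \<le> k" "d i \<noteq> d 0" "d i \<noteq> d k"
  and j: "j \<le> k" "d j \<noteq> d 0" "d j \<noteq> d k" shows "d i = d j"
proof -
  have fin: "finite (d l)" if "l \<le> k" for l
    using chainsD(2)[OF d that] finite_subset by blast
  have card_mid: "card (d l) = 2" if l: "l \<le> k" "d l \<noteq> d 0" "d l \<noteq> d k" for l
  proof -
    have s1: "d 0 \<subset> d l" using chainsD(3)[OF d _ l(1)] l(2) by blast
    have s2: "d l \<subset> d k" using chainsD(3)[OF d l(1) order_refl] l(3) by blast
    have "card (d 0) < card (d l)" using psubset_card_mono[OF fin[OF l(1)] s1] .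
    moreover have "card (d l) < card (d k)" using psubset_card_mono[OF fin[OF order_refl] s2] .
    moreover have "card (d 0) \<noteq> 0" using chainsD(1)[OF d, of 0] fin[of 0] by simp
    moreover have "card (d k) \<le> 3"
    proof -
      have "card (d k) \<le> card {0..2::nat}" using chainsD(2)[OF d order_refl] by (rule card_mono[rotated]) simp
      then show ?thesis by simp
    qed
    ultimately show ?thesis by linarith
  qed
  have "d i \<subseteq> d j \<or> d j \<subseteq> d i"
    using chainsD(3)[OF d _ i(1)] chainsD(3)[OF d _ j(1)] by (cases "i \<le> j") auto
  then show ?thesis using card_mid[OF i] card_mid[OF j] fin[OF i(1)] fin[OF j(1)]
    by (metis card_subset_eq)
qed

lemma factor: assumes d: "d \<in> chains 2 k"
  shows "\<exists>\<beta> D. \<beta> \<in> opmap k 2 \<and> D \<in> chains 2 2 \<and> d = creindex k \<beta> D"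
proof -
  define a where "a = d 0"
  define z where "z = d k"
  define P where "P = (\<lambda>i. i \<le> k \<and> d i \<noteq> a \<and> d i \<noteq> z)"
  define M where "M = (if \<exists>i. P i then d (SOME i. P i) else a)"
  define \<beta> where "\<beta> = (\<lambda>i. if i \<le> k then (if d i = a then 0 else if d i = z then 2 else 1) else (0::nat))"
  define D where "D = (\<lambda>i::nat. if i = 0 then a else if i = 1 then M else if i = 2 then z else {})"
  have M: "P i \<Longrightarrow> M = d i" for i
  proof -
    assume Pi: "P i"
    then have "P (SOME i. P i)" by (rule someI)
    then have "d (SOME i. P i) = d i" using mid_unique[OF d] Pi unfolding P_def a_def z_def by blast
    then show ?thesis using Pi by (auto simp: M_def)
  qed
  have az: "a \<subseteq> z" using chainsD(3)[OF d _ order_refl, of 0] by (simp add: a_def z_def)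
  have aM: "a \<subseteq> M" "M \<subseteq> z"
  proof -
    show "a \<subseteq> M"
    proof (cases "\<exists>i. P i")
      case True then obtain i where "P i" by blast
      then show ?thesis using M chainsD(3)[OF d, of 0 i] by (auto simp: P_def a_def)
    next
      case False then show ?thesis by (simp add: M_def)
    qed
    show "M \<subseteq> z"
    proof (cases "\<exists>i. P i")
      case True then obtain i where "P i" by blast
      then show ?thesis using M chainsD(3)[OF d, of i k] by (auto simp: P_def z_def)
    next
      case False then show ?thesis using az by (simp add: M_def)
    qed
  qed
  have ane: "a \<noteq> {}" using chainsD(1)[OF d, of 0] by (simp add: a_def)
  have zU: "z \<subseteq> {0..2}" using chainsD(2)[OF d order_refl] by (simp add: z_def)
  have DC: "D \<in> chains 2 2"
  proof (rule chainsI)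
    fix i assume "i \<le> (2::nat)"
    then have "i = 0 \<or> i = 1 \<or> i = 2" by arith
    then show "D i \<noteq> {}" "D i \<subseteq> {0..2}" using ane aM az zU by (auto simp: D_def)
  next
    fix i j :: nat assume "i \<le> j" "j \<le> 2"
    then have "(i = 0 \<or> i = 1 \<or> i = 2) \<and> (j = 0 \<or> j = 1 \<or> j = 2)" by arith
    then show "D i \<subseteq> D j" using aM az \<open>i \<le> j\<close> by (auto simp: D_def)
  next
    fix i :: nat assume "2 < i" then show "D i = {}" by (simp add: D_def)
  qed
  have B: "\<beta> \<in> opmap k 2"
  proof (rule opmapI)
    fix i assume "i \<le> k" then show "\<beta> i \<le> 2" by (simp add: \<beta>_def)
  next
    fix i j assume ij: "i \<le> j" "j \<le> k"
    have sub: "d i \<subseteq> d j" using chainsD(3)[OF d ij] .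
    have dj: "d j \<subseteq> z" using chainsD(3)[OF d ij(2) order_refl] by (simp add: z_def)
    have ad: "a \<subseteq> d i" using chainsD(3)[OF d _ order_trans[OF ij], of 0] by (simp add: a_def)
    show "\<beta> i \<le> \<beta> j"
    proof (cases "d i = a")
      case True then show ?thesis using ij by (simp add: \<beta>_def)
    next
      case False
      then have "d j \<noteq> a" using sub ad by blast
      moreover have "d i = z \<Longrightarrow> d j = z" using sub dj by blast
      ultimately show ?thesis using ij False by (simp add: \<beta>_def)
    qed
  next
    fix i assume "k < i" then show "\<beta> i = 0" by (simp add: \<beta>_def)
  qed
  have "d = creindex k \<beta> D"
  proof
    fix i show "d i = creindex k \<beta> D i"
    proof (cases "i \<le> k")
      case True
      show ?thesis
      proof (cases "d i = a")
        case True then show ?thesis using \<open>i \<le> k\<close> by (simp add: creindex_def \<beta>_def D_def)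
      next
        case False
        show ?thesis
        proof (cases "d i = z")
          case True then show ?thesis using \<open>i \<le> k\<close> False by (simp add: creindex_def \<beta>_def D_def)
        next
          case False2: False
          then have "P i" using \<open>i \<le> k\<close> False by (simp add: P_def)
          then show ?thesis using \<open>i \<le> k\<close> False False2 M by (simp add: creindex_def \<beta>_def D_def)
        qed
      qed
    next
      case False then show ?thesis using chainsD(4)[OF d] by (simp add: creindex_def)
    qed
  qed
  then show ?thesis using B DC by blast
qed


definition ce where "ce k d = cls k (EE d)"
definition "pt S = (\<lambda>i::nat. if i = 0 then S else ({}::nat set))"
definition "pair S T = (\<lambda>i::nat. if i = 0 then S else if i = 1 then T else ({}::nat set))"
definition "trip A B C = (\<lambda>i::nat. if i = 0 then A else if i = 1 then B else if i = 2 then C else ({}::nat set))"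

lemma ce_obj: "d \<in> chains 2 k \<Longrightarrow> ce k d \<in> sobj YY k"
  by (simp add: ce_def sobj_YY EE_dom)

lemma ce_map: "d \<in> chains 2 k \<Longrightarrow> \<beta> \<in> opmap k' k \<Longrightarrow> smap YY k k' \<beta> (ce k d) = ce k' (creindex k' \<beta> d)"
  unfolding ce_def by (subst smap_cls) (simp_all add: EE_dom rx_def, simp add: EE_def)

lemma ce_base: "d \<in> chains 2 k \<Longrightarrow> d k \<noteq> UU \<Longrightarrow> ce k d = cls k (0, None, c0 k)"
  by (simp add: ce_def cls_eq base_rel)

lemma ce_base_eq: "d \<in> chains 2 k \<Longrightarrow> d k \<noteq> UU \<Longrightarrow> d' \<in> chains 2 k \<Longrightarrow> d' k \<noteq> UU \<Longrightarrow> ce k d = ce k d'"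
  by (simp add: ce_base)

lemma pt_chains: "S \<noteq> {} \<Longrightarrow> S \<subseteq> UU \<Longrightarrow> pt S \<in> chains 2 0"
  by (rule chainsI) (auto simp: pt_def UU_def)
lemma pair_chains: "S \<noteq> {} \<Longrightarrow> S \<subseteq> T \<Longrightarrow> T \<subseteq> UU \<Longrightarrow> pair S T \<in> chains 2 1"
proof (rule chainsI)
  fix i j :: nat assume "S \<subseteq> T" "i \<le> j" "j \<le> 1"
  then have "(i = 0 \<or> i = 1) \<and> (j = 0 \<or> j = 1)" by arith
  then show "pair S T i \<subseteq> pair S T j" using \<open>S \<subseteq> T\<close> \<open>i \<le> j\<close> by (auto simp: pair_def)
qed (auto simp: pair_def UU_def)
lemma trip_chains: "A \<noteq> {} \<Longrightarrow> A \<subseteq> B \<Longrightarrow> B \<subseteq> C \<Longrightarrow> C \<subseteq> UU \<Longrightarrow> trip A B C \<in> chains 2 2"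
proof (rule chainsI)
  fix i j :: nat assume "A \<subseteq> B" "B \<subseteq> C" "i \<le> j" "j \<le> 2"
  then have "(i = 0 \<or> i = 1 \<or> i = 2) \<and> (j = 0 \<or> j = 1 \<or> j = 2)" by arith
  then show "trip A B C i \<subseteq> trip A B C j" using \<open>A \<subseteq> B\<close> \<open>B \<subseteq> C\<close> \<open>i \<le> j\<close> by (auto simp: trip_def)
next
  fix i :: nat assume "i \<le> 2" "A \<noteq> {}" "A \<subseteq> B" "B \<subseteq> C" "C \<subseteq> UU"
  then have "i = 0 \<or> i = 1 \<or> i = 2" by arith
  then show "trip A B C i \<noteq> {}" "trip A B C i \<subseteq> {0..2}"
    using \<open>A \<noteq> {}\<close> \<open>A \<subseteq> B\<close> \<open>B \<subseteq> C\<close> \<open>C \<subseteq> UU\<close> by (auto simp: trip_def UU_def)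
qed (auto simp: trip_def)

lemma cr_v0: "creindex 0 v0 (trip A B C) = pt A"
  by (rule ext) (simp add: creindex_def v0_def trip_def pt_def)
lemma cr_v1: "creindex 0 v1 (trip A B C) = pt B"
  by (rule ext) (simp add: creindex_def v1_def trip_def pt_def)
lemma cr_dd0: "creindex 1 dd0 (trip A B C) = pair B C"
proof
  fix i :: nat have "i = 0 \<or> i = 1 \<or> 1 < i" by arith
  then show "creindex 1 dd0 (trip A B C) i = pair B C i"
    by (elim disjE) (simp_all add: creindex_def dd0_def trip_def pair_def)
qed
lemma cr_dd1: "creindex 1 dd1 (trip A B C) = pair A C"
proof
  fix i :: nat have "i = 0 \<or> i = 1 \<or> 1 < i" by arith
  then show "creindex 1 dd1 (trip A B C) i = pair A C i"
    by (elim disjE) (simp_all add: creindex_def dd1_def trip_def pair_def)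
qed
lemma cr_dd2: "creindex 1 dd2 (trip A B C) = pair A B"
proof
  fix i :: nat have "i = 0 \<or> i = 1 \<or> 1 < i" by arith
  then show "creindex 1 dd2 (trip A B C) i = pair A B i"
    by (elim disjE) (simp_all add: creindex_def dd2_def trip_def pair_def)
qed
lemma cr_s0: "creindex 2 s0 (pair S T) = trip S S T"
proof
  fix i :: nat have "i = 0 \<or> i = 1 \<or> i = 2 \<or> 2 < i" by arith
  then show "creindex 2 s0 (pair S T) i = trip S S T i"
    by (elim disjE) (simp_all add: creindex_def s0_def trip_def pair_def)
qed
lemma cr_s1: "creindex 2 s1 (pair S T) = trip S T T"
proof
  fix i :: nat have "i = 0 \<or> i = 1 \<or> i = 2 \<or> 2 < i" by arith
  then show "creindex 2 s1 (pair S T) i = trip S T T i"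
    by (elim disjE) (simp_all add: creindex_def s1_def trip_def pair_def)
qed


type_synonym ysimp = "(nat \<times> (nat \<Rightarrow> nat) option \<times> (nat \<Rightarrow> nat set)) set"

lemma neUU: "x \<in> UU \<Longrightarrow> x \<notin> S \<Longrightarrow> S \<noteq> UU" by blast

context
  fixes R :: "nat \<Rightarrow> (ysimp \<times> ysimp) set"
  assumes R: "compat_eqrel YY R" and ns: "nonsingular (squot YY R)"
begin

lemma Rmap: "(ce k d, ce k d') \<in> R k \<Longrightarrow> d \<in> chains 2 k \<Longrightarrow> d' \<in> chains 2 k \<Longrightarrow> \<beta> \<in> opmap k' k \<Longrightarrow>
   (ce k' (creindex k' \<beta> d), ce k' (creindex k' \<beta> d')) \<in> R k'"
  using ceq_map[OF R] ce_map by metis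

lemma Rsym: "(x,y) \<in> R k \<Longrightarrow> (y,x) \<in> R k" by (rule ceq_sym[OF R])
lemma Rtrans: "(x,y) \<in> R k \<Longrightarrow> (y,z) \<in> R k \<Longrightarrow> (x,z) \<in> R k" by (rule ceq_trans[OF R])

lemma TRI: assumes A: "A \<noteq> {}" "A \<subseteq> B" "B \<subseteq> UU" "B \<noteq> UU"
  shows "(ce 2 (trip A B UU), ce 2 (trip A A UU)) \<in> R 2 \<and> (ce 1 (pair A UU), ce 1 (pair B UU)) \<in> R 1"
proof -
  have UU: "UU \<subseteq> UU" by simp
  have AU: "A \<noteq> UU" using A by blast
  have Bne: "B \<noteq> {}" using A by blast
  have tc: "trip A B UU \<in> chains 2 2" using trip_chains[OF A(1,2) A(3) UU] .
  let ?t = "ce 2 (trip A B UU)"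
  have t: "?t \<in> sobj YY 2" using ce_obj[OF tc] .
  have pA: "pt A \<in> chains 2 0" using pt_chains[OF A(1)] A by blast
  have pB: "pt B \<in> chains 2 0" using pt_chains[OF Bne A(3)] .
  have "smap YY 2 0 v0 ?t = ce 0 (pt A)" using ce_map[OF tc ops_opmap(1)] cr_v0 by simp
  moreover have "smap YY 2 0 v1 ?t = ce 0 (pt B)" using ce_map[OF tc ops_opmap(2)] cr_v1 by simp
  moreover have "ce 0 (pt A) = ce 0 (pt B)" using ce_base_eq[OF pA _ pB] AU A(4) by (simp add: pt_def)
  ultimately have v: "(smap YY 2 0 v0 ?t, smap YY 2 0 v1 ?t) \<in> R 0"
    using ceq_refl[OF R ce_obj[OF pB]] by simp
  have e1: "smap YY 1 2 s0 (smap YY 2 1 dd1 ?t) = ce 2 (trip A A UU)"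
    using ce_map[OF tc ops_opmap(4)] cr_dd1 ce_map[OF pair_chains[OF A(1) _ UU] ops_opmap(6)] cr_s0 A by simp
  have e2: "smap YY 1 2 s1 (smap YY 2 1 dd2 ?t) = ce 2 (trip A B B)"
    using ce_map[OF tc ops_opmap(5)] cr_dd2 ce_map[OF pair_chains[OF A(1,2) A(3)] ops_opmap(7)] cr_s1 by simp
  have pAU: "pair A UU \<in> chains 2 1" using pair_chains[OF A(1) _ UU] A by blast
  have pBU: "pair B UU \<in> chains 2 1" using pair_chains[OF Bne A(3) UU] .
  have pAB: "pair A B \<in> chains 2 1" using pair_chains[OF A(1,2,3)] .
  have pBB: "pair B B \<in> chains 2 1" using pair_chains[OF Bne _ A(3)] by simp
  have tAA: "trip A A UU \<in> chains 2 2" using trip_chains[OF A(1) _ _ UU] A by blast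
  have tABB: "trip A B B \<in> chains 2 2" using trip_chains[OF A(1,2) _ A(3)] by simp
  have tAAB: "trip A A B \<in> chains 2 2" using trip_chains[OF A(1) _ A(2,3)] by simp
  from DEG[OF is_sset_YY R ns t v] e1 e2
  have "(?t, ce 2 (trip A A UU)) \<in> R 2 \<or> (?t, ce 2 (trip A B B)) \<in> R 2" by simp
  then show ?thesis
  proof
    assume h: "(?t, ce 2 (trip A A UU)) \<in> R 2"
    have "(ce 1 (pair B UU), ce 1 (pair A UU)) \<in> R 1"
      using Rmap[OF h tc tAA ops_opmap(3)] cr_dd0 by simp
    then show ?thesis using h Rsym by blast
  next
    assume h: "(?t, ce 2 (trip A B B)) \<in> R 2"
    have h0: "(ce 1 (pair B UU), ce 1 (pair B B)) \<in> R 1"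
      using Rmap[OF h tc tABB ops_opmap(3)] cr_dd0 by simp
    have h1: "(ce 1 (pair A UU), ce 1 (pair A B)) \<in> R 1"
      using Rmap[OF h tc tABB ops_opmap(4)] cr_dd1 by simp
    have eqb: "ce 1 (pair B B) = ce 1 (pair A B)" using ce_base_eq[OF pBB _ pAB] A(4) by (simp add: pair_def)
    have edge: "(ce 1 (pair A UU), ce 1 (pair B UU)) \<in> R 1"
      using Rtrans[OF h1 Rsym[OF h0[unfolded eqb]]] .
    have h2: "(ce 2 (trip A A UU), ce 2 (trip A A B)) \<in> R 2"
      using Rmap[OF h1 pAU pAB ops_opmap(6)] cr_s0 by simp
    have eqb2: "ce 2 (trip A A B) = ce 2 (trip A B B)" using ce_base_eq[OF tAAB _ tABB] A(4) by (simp add: trip_def)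
    have "(?t, ce 2 (trip A A UU)) \<in> R 2" using Rtrans[OF h Rsym[OF h2[unfolded eqb2]]] .
    then show ?thesis using edge by blast
  qed
qed

end

lemma NN_chains: assumes D: "D \<in> chains 2 k" shows "NN k D \<in> chains 2 k"
proof (rule chainsI)
  fix i j :: nat assume ij: "i \<le> j" "j \<le> k"
  have sub: "D i \<subseteq> D j" using chainsD(3)[OF D ij] .
  have ju: "D j \<subseteq> UU" using chainsD(2)[OF D ij(2)] by (simp add: UU_def)
  have z: "(0::nat) \<in> UU" by (simp add: UU_def)
  show "NN k D i \<subseteq> NN k D j"
  proof (cases "D i = UU")
    case True
    then have "D j = UU" using sub ju by blast
    then show ?thesis using True ij by (simp add: NN_def)
  next
    case False
    then show ?thesis using ij z by (simp add: NN_def)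
  qed
next
  fix i assume "i \<le> k"
  have "UU \<noteq> {}" "UU \<subseteq> {0..2}" "{0::nat} \<subseteq> {0..2}" by (auto simp: UU_def)
  then show "NN k D i \<noteq> {}" "NN k D i \<subseteq> {0..2}" using \<open>i \<le> k\<close> by (simp_all add: NN_def)
next
  fix i assume "k < i" then show "NN k D i = {}" by (simp add: NN_def)
qed

context
  fixes R :: "nat \<Rightarrow> (ysimp \<times> ysimp) set"
  assumes R: "compat_eqrel YY R" and ns: "nonsingular (squot YY R)"
begin

lemma EDG: assumes "A \<noteq> {}" "A \<subseteq> B" "B \<subseteq> UU" "B \<noteq> UU"
  shows "(ce 1 (pair A UU), ce 1 (pair B UU)) \<in> R 1"
  using TRI[OF R ns assms] by blast

lemma EDGE: assumes S: "S \<noteq> {}" "S \<subseteq> UU" "S \<noteq> UU"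
  shows "(ce 1 (pair S UU), ce 1 (pair {0} UU)) \<in> R 1"
proof -
  have U: "UU = {0,1,2}" by (auto simp: UU_def)
  have n01: "{0,1::nat} \<noteq> UU" by (rule neUU[of 2]) (auto simp: UU_def)
  have n02: "{0,2::nat} \<noteq> UU" by (rule neUU[of 1]) (auto simp: UU_def)
  have n12: "{1,2::nat} \<noteq> UU" by (rule neUU[of 0]) (auto simp: UU_def)
  have a: "(ce 1 (pair {0} UU), ce 1 (pair {0,1} UU)) \<in> R 1" using EDG n01 by (simp add: U)
  have b: "(ce 1 (pair {1} UU), ce 1 (pair {0,1} UU)) \<in> R 1" using EDG n01 by (simp add: U)
  have c: "(ce 1 (pair {0} UU), ce 1 (pair {0,2} UU)) \<in> R 1" using EDG n02 by (simp add: U)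
  have d: "(ce 1 (pair {2} UU), ce 1 (pair {0,2} UU)) \<in> R 1" using EDG n02 by (simp add: U)
  have e: "(ce 1 (pair {1} UU), ce 1 (pair {1,2} UU)) \<in> R 1" using EDG n12 by (simp add: U)
  have r0: "(ce 1 (pair {0} UU), ce 1 (pair {0} UU)) \<in> R 1"
    by (rule ceq_refl[OF R ce_obj[OF pair_chains]]) (auto simp: UU_def)
  have r1: "(ce 1 (pair {1} UU), ce 1 (pair {0} UU)) \<in> R 1" using Rtrans[OF R ns b Rsym[OF R ns a]] .
  have r2: "(ce 1 (pair {2} UU), ce 1 (pair {0} UU)) \<in> R 1" using Rtrans[OF R ns d Rsym[OF R ns c]] .
  have r01: "(ce 1 (pair {0,1} UU), ce 1 (pair {0} UU)) \<in> R 1" using Rsym[OF R ns a] .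
  have r02: "(ce 1 (pair {0,2} UU), ce 1 (pair {0} UU)) \<in> R 1" using Rsym[OF R ns c] .
  have r12: "(ce 1 (pair {1,2} UU), ce 1 (pair {0} UU)) \<in> R 1" using Rtrans[OF R ns Rsym[OF R ns e] r1] .
  have SU: "S \<subseteq> {0,1,2}" using S(2) U by simp
  define T where "T = (if 0 \<in> S then (if 1 \<in> S then (if 2 \<in> S then {0,1,2} else {0,1}) else (if 2 \<in> S then {0,2} else {0}))
     else (if 1 \<in> S then (if 2 \<in> S then {1,2} else {1}) else (if 2 \<in> S then {2} else ({}::nat set))))"
  have ST: "S = T"
  proof (rule set_eqI)
    fix x show "x \<in> S \<longleftrightarrow> x \<in> T"
    proof
      assume "x \<in> S"
      then have "x = 0 \<or> x = 1 \<or> x = 2" using SU by blast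
      then show "x \<in> T" using \<open>x \<in> S\<close> unfolding T_def by (elim disjE) simp_all
    next
      assume "x \<in> T" then show "x \<in> S" unfolding T_def by (auto split: if_splits)
    qed
  qed
  have T1: "T \<noteq> {}" and T3: "T \<noteq> {0,1,2}" using S(1) S(3) U ST by simp_all
  show ?thesis unfolding ST using T1 T3 r0 r1 r2 r01 r02 r12 unfolding T_def
    by (cases "0 \<in> S"; cases "1 \<in> S"; cases "2 \<in> S") simp_all
qed

lemma NN_trip: "NN 2 (trip A B C) = trip (if A = UU then UU else {0}) (if B = UU then UU else {0}) (if C = UU then UU else {0})"
proof
  fix i :: nat have "i = 0 \<or> i = 1 \<or> i = 2 \<or> 2 < i" by arith
  then show "NN 2 (trip A B C) i = trip (if A = UU then UU else {0}) (if B = UU then UU else {0}) (if C = UU then UU else {0}) i"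
    by (elim disjE) (simp_all add: NN_def trip_def)
qed

lemma TT: assumes D: "D \<in> chains 2 2" shows "(ce 2 D, ce 2 (NN 2 D)) \<in> R 2"
proof -
  let ?A = "D 0" and ?B = "D 1" and ?C = "D 2"
  have Dt: "D = trip ?A ?B ?C"
  proof
    fix i :: nat have "i = 0 \<or> i = 1 \<or> i = 2 \<or> 2 < i" by arith
    then show "D i = trip ?A ?B ?C i" using chainsD(4)[OF D, of i] by (elim disjE) (simp_all add: trip_def)
  qed
  have An: "?A \<noteq> {}" using chainsD(1)[OF D, of 0] by simp
  have AB: "?A \<subseteq> ?B" "?B \<subseteq> ?C" using chainsD(3)[OF D] by auto
  have CU: "?C \<subseteq> UU" using chainsD(2)[OF D, of 2] by (simp add: UU_def)
  have NC: "NN 2 D \<in> chains 2 2" using NN_chains[OF D] .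
  have ND: "NN 2 D = NN 2 (trip ?A ?B ?C)" using arg_cong[OF Dt, of "NN 2"] .
  have cD: "ce 2 D = ce 2 (trip ?A ?B ?C)" using arg_cong[OF Dt, of "ce 2"] .
  show ?thesis
  proof (cases "?C = UU")
    case False
    have "NN 2 D 2 \<noteq> UU" using False ne02 by (simp add: NN_def UU_def)
    then have "ce 2 D = ce 2 (NN 2 D)" using ce_base_eq[OF D False NC] by simp
    then show ?thesis using ceq_refl[OF R ce_obj[OF D]] by simp
  next
    case CT: True
    show ?thesis
    proof (cases "?A = UU")
      case True
      then have "?B = UU" using AB CU CT by blast
      then have "NN 2 D = trip ?A ?B ?C" using True CT ND by (simp add: NN_trip)
      then have "NN 2 D = D" using Dt by simp
      then show ?thesis using ceq_refl[OF R ce_obj[OF D]] by simp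
    next
      case AF: False
      have AU: "?A \<subseteq> UU" using AB CU by blast
      have z: "{0::nat} \<noteq> {}" "{0::nat} \<subseteq> UU" by (auto simp: UU_def)
      have rr: "(ce 1 (pair ?A UU), ce 1 (pair {0} UU)) \<in> R 1" using EDGE[OF An AU AF] .
      show ?thesis
      proof (cases "?B = UU")
        case True
        have "NN 2 D = trip {0} UU UU" using True CT AF ND by (simp add: NN_trip)
        moreover have "ce 2 D = ce 2 (trip ?A UU UU)" using cD True CT by simp
        ultimately have "(ce 2 D, ce 2 (NN 2 D)) = (ce 2 (creindex 2 s1 (pair ?A UU)), ce 2 (creindex 2 s1 (pair {0} UU)))"
          by (simp add: cr_s1)
        then show ?thesis using Rmap[OF R ns rr pair_chains[OF An AU order_refl] pair_chains[OF z order_refl] ops_opmap(7)]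
          by simp
      next
        case BF: False
        have "?A \<noteq> UU" using AF .
        have "NN 2 D = trip {0} {0} UU" using BF CT AF ND by (simp add: NN_trip)
        then have e: "ce 2 (NN 2 D) = ce 2 (creindex 2 s0 (pair {0} UU))" using cr_s0 by simp
        have h1: "(ce 2 (trip ?A ?B UU), ce 2 (trip ?A ?A UU)) \<in> R 2"
          using TRI[OF R ns An AB(1) order_trans[OF AB(2) CU] BF] by blast
        have h2: "(ce 2 (creindex 2 s0 (pair ?A UU)), ce 2 (creindex 2 s0 (pair {0} UU))) \<in> R 2"
          by (rule Rmap[OF R ns rr pair_chains[OF An AU order_refl] pair_chains[OF z order_refl] ops_opmap(6)])
        have "ce 2 D = ce 2 (trip ?A ?B UU)" using cD CT by simp
        then show ?thesis using Rtrans[OF R ns h1 h2[unfolded cr_s0]] e cr_s0 by simp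
      qed
    qed
  qed
qed

lemma good_rel: assumes y: "y \<in> sobj YY k" shows "(y, cls k (EE (cg k (Phi k y)))) \<in> R k"
proof -
  obtain p where p: "p \<in> sd_dom XX k" "y = cls k p" using y by (auto simp: sobj_YY)
  obtain d where d: "d \<in> chains 2 k" "(p, EE d) \<in> sd_rel XX k" using reduce[OF p(1)] by blast
  have yd: "y = ce k d" using p(2) d(2) by (simp add: ce_def cls_eq)
  have Ph: "Phi k y = (\<lambda>i. if i \<le> k \<and> d i = {0..2} then 1 else 0)"
    using yd Phi_cls[OF EE_dom[OF d(1)]] phi'_EE[OF d(1)] by (simp add: ce_def)
  have cgN: "cg k (Phi k y) = NN k d" unfolding Ph by (simp add: cg_def NN_def UU_def fun_eq_iff)
  obtain \<beta> D where f: "\<beta> \<in> opmap k 2" "D \<in> chains 2 2" "d = creindex k \<beta> D" using factor[OF d(1)] by blast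
  have NC: "NN 2 D \<in> chains 2 2" using NN_chains[OF f(2)] .
  have "(ce k (creindex k \<beta> D), ce k (creindex k \<beta> (NN 2 D))) \<in> R k"
    by (rule Rmap[OF R ns TT[OF f(2)] f(2) NC f(1)])
  then have "(ce k d, ce k (NN k d)) \<in> R k" using f(3) NN_creindex[OF f(1)] by simp
  then show ?thesis using yd cgN by (simp add: ce_def)
qed

end

lemma DV: assumes y: "y \<in> sobj YY k" and y': "y' \<in> sobj YY k"
  shows "dsing_vec YY k y = dsing_vec YY k y' \<longleftrightarrow> Phi k y = Phi k y'"
proof
  assume "dsing_vec YY k y = dsing_vec YY k y'"
  then have "dsing_vec YY k y R0 = dsing_vec YY k y' R0" by simp
  then have "R0 k `` {y} = R0 k `` {y'}" using R0_compat R0_nonsing by (simp add: dsing_vec_def)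
  moreover have "y \<in> R0 k `` {y}" using R0_class[OF y] y by simp
  ultimately have "y \<in> R0 k `` {y'}" by simp
  then show "Phi k y = Phi k y'" using R0_class[OF y'] by simp
next
  assume e: "Phi k y = Phi k y'"
  show "dsing_vec YY k y = dsing_vec YY k y'"
  proof
    fix R :: "nat \<Rightarrow> (ysimp \<times> ysimp) set"
    show "dsing_vec YY k y R = dsing_vec YY k y' R"
    proof (cases "compat_eqrel YY R \<and> nonsingular (squot YY R)")
      case True
      then have R: "compat_eqrel YY R" and ns: "nonsingular (squot YY R)" by auto
      have "(y, cls k (EE (cg k (Phi k y)))) \<in> R k" by (rule good_rel[OF R ns y])
      moreover have "(y', cls k (EE (cg k (Phi k y')))) \<in> R k" by (rule good_rel[OF R ns y'])
      ultimately have "(y, y') \<in> R k" using e ceq_trans[OF R] ceq_sym[OF R] by metis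
      then have "R k `` {y} = R k `` {y'}" by (rule equiv_class_eq[OF ceq_equiv[OF R]])
      then show ?thesis using True by (simp add: dsing_vec_def)
    next
      case c: False then show ?thesis unfolding dsing_vec_def by (simp only: if_False c)
    qed
  qed
qed

definition "FF n t = Phi n (SOME y. y \<in> sobj YY n \<and> dsing_vec YY n y = t)"

lemma FF_val: assumes y: "y \<in> sobj YY n" shows "FF n (dsing_vec YY n y) = Phi n y"
proof -
  let ?y0 = "SOME y0. y0 \<in> sobj YY n \<and> dsing_vec YY n y0 = dsing_vec YY n y"
  have "?y0 \<in> sobj YY n \<and> dsing_vec YY n ?y0 = dsing_vec YY n y" using y by (rule_tac someI) auto
  then have "Phi n ?y0 = Phi n y" using DV[of ?y0 n y] y by blast
  then show ?thesis by (simp add: FF_def)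
qed

lemma sobj_Dsing: "sobj (Dsing YY) n = dsing_vec YY n ` sobj YY n" by (simp add: Dsing_def)

lemma iso: "sset_iso (Dsing YY) (Delta 1) FF"
  unfolding sset_iso_def
proof (intro conjI allI impI)
  fix n
  show "bij_betw (FF n) (sobj (Dsing YY) n) (sobj (Delta 1) n)"
    unfolding bij_betw_def
  proof
    show "inj_on (FF n) (sobj (Dsing YY) n)"
    proof (rule inj_onI)
      fix t t' assume "t \<in> sobj (Dsing YY) n" "t' \<in> sobj (Dsing YY) n" "FF n t = FF n t'"
      then obtain y y' where "y \<in> sobj YY n" "y' \<in> sobj YY n" "t = dsing_vec YY n y" "t' = dsing_vec YY n y'"
        "FF n (dsing_vec YY n y) = FF n (dsing_vec YY n y')" by (auto simp: sobj_Dsing)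
      then show "t = t'" using FF_val DV by metis
    qed
    show "FF n ` sobj (Dsing YY) n = sobj (Delta 1) n"
    proof
      show "FF n ` sobj (Dsing YY) n \<subseteq> sobj (Delta 1) n"
        using FF_val Phi_opmap by (auto simp: sobj_Dsing Delta_def)
      show "sobj (Delta 1) n \<subseteq> FF n ` sobj (Dsing YY) n"
      proof
        fix g assume "g \<in> sobj (Delta 1) n"
        then have g: "g \<in> opmap n 1" by (simp add: Delta_def)
        obtain y where "y \<in> sobj YY n" "Phi n y = g" using Phi_surj[OF g] by blast
        then show "g \<in> FF n ` sobj (Dsing YY) n" using FF_val by (force simp: sobj_Dsing)
      qed
    qed
  qed
next
  fix n m \<alpha> t assume \<alpha>: "\<alpha> \<in> opmap m n" and t: "t \<in> sobj (Dsing YY) n"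
  let ?y0 = "SOME y. y \<in> sobj YY n \<and> dsing_vec YY n y = t"
  have "\<exists>y. y \<in> sobj YY n \<and> dsing_vec YY n y = t" using t by (auto simp: sobj_Dsing)
  then have y0: "?y0 \<in> sobj YY n \<and> dsing_vec YY n ?y0 = t" by (rule someI_ex)
  have "smap (Dsing YY) n m \<alpha> t = dsing_vec YY m (smap YY n m \<alpha> ?y0)" by (simp add: Dsing_def)
  then have 1: "FF m (smap (Dsing YY) n m \<alpha> t) = Phi m (smap YY n m \<alpha> ?y0)"
    using FF_val[OF sset_closed[OF is_sset_YY \<alpha>]] y0 by simp
  have 2: "Phi m (smap YY n m \<alpha> ?y0) = ocomp m (Phi n ?y0) \<alpha>" using Phi_nat[OF _ \<alpha>] y0 by simp
  have 3: "Phi n ?y0 = FF n t" using FF_val[of ?y0 n] y0 by simp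
  show "FF m (smap (Dsing YY) n m \<alpha> t) = smap (Delta 1) n m \<alpha> (FF n t)"
    unfolding 1 2 3 by (simp add: Delta_def)
qed

theorem mainTheorem10:
  shows "\<exists>f. sset_iso (Dsing (Sd (collapse (Delta 2) (bdry 2)))) (Delta 1) f"
proof
  show "sset_iso (Dsing (Sd (collapse (Delta 2) (bdry 2)))) (Delta 1) FF"
    using iso by (simp only: YY_def XX_def)
qed


end
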